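(* For every $\alpha\in\mathbb{N}_0$ and $y\in C^{(2\alpha+4)}(0,\infty)$, $$L_{2\alpha+4,x}^{\alpha}y(x)=-\Big\{L_{2,x}^{2\alpha+1}-\frac{2\alpha+2}{x}-\alpha-1\Big\}L_{2\alpha+2,x}^{\alpha-1}y(x),\qquad x>0.$$
   Context: $D_x^i$ is the $i$-fold derivative. For integer $\alpha\ge-1$, $L_{2\alpha+4,x}^{\alpha}y(x)=(-1)^{\alpha+1}e^x x\,D_x^{\alpha+2}\{e^{-x}D_x^{\alpha+2}[x^{\alpha+1}y(x)]\}$; in particular for $\alpha=-1$ this gives $L_{2,x}^{-1}y=x[y''-y']$. For real $\gamma$, $L_{2,x}^{\gamma}=xD_x^2+(\gamma+1-x)D_x$ (consistent with the previous at $\gamma=-1$). *)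

theory Defs
  imports "HOL-Analysis.Analysis"
begin

definition Dx :: "nat \<Rightarrow> (real \<Rightarrow> real) \<Rightarrow> real \<Rightarrow> real" where
  "Dx i f = (deriv ^^ i) f"

definition Cn_on :: "nat \<Rightarrow> real set \<Rightarrow> (real \<Rightarrow> real) \<Rightarrow> bool" where
  "Cn_on n S y \<longleftrightarrow>
     (\<forall>k<n. \<forall>x\<in>S. (Dx k y has_real_derivative Dx (Suc k) y x) (at x)) \<and>
     continuous_on S (Dx n y)"

text \<open>For integer a \<ge> -1:
  L^a_{2a+4,x} y(x) = (-1)^(a+1) e^x x D^(a+2) { e^(-x) D^(a+2) [x^(a+1) y(x)] }.\<close>
definition Lhigh :: "int \<Rightarrow> (real \<Rightarrow> real) \<Rightarrow> real \<Rightarrow> real" where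
  "Lhigh a y x =
     (-1) ^ nat (a + 1) * exp x * x *
       Dx (nat (a + 2)) (\<lambda>t. exp (- t) * Dx (nat (a + 2)) (\<lambda>s. s ^ nat (a + 1) * y s) t) x"

definition L2 :: "real \<Rightarrow> (real \<Rightarrow> real) \<Rightarrow> real \<Rightarrow> real" where
  "L2 g y x = x * Dx 2 y x + (g + 1 - x) * Dx 1 y x"

end

theory Submission
  imports Defs
begin

definition Sm :: "nat \<Rightarrow> (real \<Rightarrow> real) \<Rightarrow> bool" where
  "Sm n f \<longleftrightarrow> (\<forall>k<n. \<forall>t>0. (Dx k f has_real_derivative Dx (Suc k) f t) (at t))"

lemma Dx_0[simp]: "Dx 0 f = f" by (simp add: Dx_def)
lemma Dx_Suc: "Dx (Suc k) f = Dx k (deriv f)"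
  by (simp add: Dx_def funpow_Suc_right del: funpow.simps)
lemma Dx_add: "Dx a (Dx b f) = Dx (a + b) f"
  by (simp add: Dx_def funpow_add)
lemma Dx_1: "Dx 1 f = deriv f" by (simp add: Dx_Suc)

lemma ev_pos: "t > 0 \<Longrightarrow> eventually (\<lambda>s. s > 0) (nhds (t::real))"
  using eventually_nhds_in_open[of "{0<..}" t] by simp

lemma Dx_local:
  assumes "\<forall>s>0. f s = g s" "t > 0"
  shows "Dx k f t = Dx k g t"
proof -
  have "eventually (\<lambda>s. f s = g s) (nhds t)"
    using ev_pos[OF assms(2)] by eventually_elim (use assms in auto)
  thus ?thesis unfolding Dx_def by (rule higher_deriv_cong_ev) simp
qed

lemma deriv_local:
  fixes f g :: "real \<Rightarrow> real"
  assumes "\<forall>s>0. f s = g s" "t > 0"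
  shows "deriv f t = deriv g t"
  using Dx_local[OF assms, of 1] by (metis Dx_1)

lemma SmD: "Sm n f \<Longrightarrow> k < n \<Longrightarrow> t > 0 \<Longrightarrow> (Dx k f has_real_derivative Dx (Suc k) f t) (at t)"
  unfolding Sm_def by blast

lemma Sm_Suc: "Sm (Suc n) f \<longleftrightarrow>
   (\<forall>t>0. (f has_real_derivative deriv f t) (at t)) \<and> Sm n (deriv f)"
  unfolding Sm_def by (auto simp: less_Suc_eq_0_disj Dx_Suc)

lemma Sm_0[simp]: "Sm 0 f" by (simp add: Sm_def)

lemma Sm_mono: "Sm n f \<Longrightarrow> m \<le> n \<Longrightarrow> Sm m f"
  unfolding Sm_def by auto

lemma Sm_Dx: "Sm (k + m) f \<Longrightarrow> Sm m (Dx k f)"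
proof (induction k arbitrary: f)
  case (Suc k)
  then have "Sm (k + m) (deriv f)" using Sm_Suc by simp
  then show ?case using Suc.IH by (simp add: Dx_Suc)
qed simp

lemma Sm_local:
  assumes "\<forall>s>0. f s = g s" "Sm n f"
  shows "Sm n g"
  unfolding Sm_def
proof (intro allI impI)
  fix k t assume k: "k < n" and t: "(t::real) > 0"
  have "(Dx k f has_real_derivative Dx (Suc k) f t) (at t)" using assms(2) k t Sm_def by blast
  then have "(Dx k g has_real_derivative Dx (Suc k) f t) (at t)"
    by (rule has_field_derivative_transform_within_open[where S="{0<..}"])
       (use t Dx_local[OF assms(1)] in auto)
  then show "(Dx k g has_real_derivative Dx (Suc k) g t) (at t)"
    using Dx_local[OF assms(1) t] by simp
qed

lemma Sm_lin:
  "Sm n f \<Longrightarrow> Sm n g \<Longrightarrow> Sm n (\<lambda>t. a * f t + b * g t) \<and>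
     (\<forall>k\<le>n. \<forall>t>0. Dx k (\<lambda>t. a * f t + b * g t) t = a * Dx k f t + b * Dx k g t)"
proof (induction n arbitrary: f g)
  case 0
  then show ?case by simp
next
  case (Suc n)
  have df: "\<forall>t>0. (f has_real_derivative deriv f t) (at t)" and sf: "Sm n (deriv f)"
    using Suc.prems(1) Sm_Suc by auto
  have dg: "\<forall>t>0. (g has_real_derivative deriv g t) (at t)" and sg: "Sm n (deriv g)"
    using Suc.prems(2) Sm_Suc by auto
  have D: "\<forall>t>0. ((\<lambda>t. a * f t + b * g t) has_real_derivative a * deriv f t + b * deriv g t) (at t)"
    using df dg by (auto intro!: derivative_eq_intros)
  have eq: "\<forall>t>0. a * deriv f t + b * deriv g t = deriv (\<lambda>t. a * f t + b * g t) t"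
    using D by (auto simp: DERIV_imp_deriv)
  from Suc.IH[OF sf sg] have IH1: "Sm n (\<lambda>t. a * deriv f t + b * deriv g t)"
    and IH2: "\<forall>k\<le>n. \<forall>t>0. Dx k (\<lambda>t. a * deriv f t + b * deriv g t) t = a * Dx k (deriv f) t + b * Dx k (deriv g) t"
    by auto
  have S: "Sm n (deriv (\<lambda>t. a * f t + b * g t))" by (rule Sm_local[OF eq IH1])
  have "Sm (Suc n) (\<lambda>t. a * f t + b * g t)"
    unfolding Sm_Suc using D eq S by auto
  moreover have "\<forall>k\<le>Suc n. \<forall>t>0. Dx k (\<lambda>t. a * f t + b * g t) t = a * Dx k f t + b * Dx k g t"
  proof (intro allI impI)
    fix k t assume k: "k \<le> Suc n" and t: "(t::real) > 0"
    show "Dx k (\<lambda>t. a * f t + b * g t) t = a * Dx k f t + b * Dx k g t"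
    proof (cases k)
      case (Suc j)
      have "Dx k (\<lambda>t. a * f t + b * g t) t = Dx j (deriv (\<lambda>t. a * f t + b * g t)) t"
        by (simp only: Suc Dx_Suc)
      also have "\<dots> = Dx j (\<lambda>t. a * deriv f t + b * deriv g t) t"
        by (rule Dx_local[OF eq t, symmetric])
      also have "\<dots> = a * Dx j (deriv f) t + b * Dx j (deriv g) t"
        using Suc k t by (intro IH2[rule_format]) auto
      also have "\<dots> = a * Dx k f t + b * Dx k g t" by (simp only: Suc Dx_Suc)
      finally show ?thesis .
    qed simp
  qed
  ultimately show ?case by (rule conjI)
qed

lemma Sm_x:
  "Sm n f \<Longrightarrow> Sm n (\<lambda>t. t * f t) \<and>
     (\<forall>k\<le>n. \<forall>t>0. Dx k (\<lambda>t. t * f t) t = t * Dx k f t + real k * Dx (k - 1) f t)"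
proof (induction n arbitrary: f)
  case 0
  then show ?case by simp
next
  case (Suc n)
  have df: "\<forall>t>0. (f has_real_derivative deriv f t) (at t)" and sf: "Sm n (deriv f)"
    using Suc.prems(1) Sm_Suc by auto
  have fn: "Sm n f" using Suc.prems Sm_mono by auto
  have D: "\<forall>t>0. ((\<lambda>t. t * f t) has_real_derivative 1 * f t + 1 * (t * deriv f t)) (at t)"
    using df by (auto intro!: derivative_eq_intros)
  have eq: "\<forall>t>0. 1 * f t + 1 * (t * deriv f t) = deriv (\<lambda>t. t * f t) t"
    using D by (auto simp: DERIV_imp_deriv)
  from Suc.IH[OF sf] have IH1: "Sm n (\<lambda>t. t * deriv f t)"
    and IH2: "\<forall>k\<le>n. \<forall>t>0. Dx k (\<lambda>t. t * deriv f t) t = t * Dx k (deriv f) t + real k * Dx (k - 1) (deriv f) t"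
    by auto
  from Sm_lin[OF fn IH1, of 1 1] have L1: "Sm n (\<lambda>t. 1 * f t + 1 * (t * deriv f t))"
    and L2: "\<forall>k\<le>n. \<forall>t>0. Dx k (\<lambda>t. 1 * f t + 1 * (t * deriv f t)) t = 1 * Dx k f t + 1 * Dx k (\<lambda>t. t * deriv f t) t"
    by auto
  have S: "Sm n (deriv (\<lambda>t. t * f t))" by (rule Sm_local[OF eq L1])
  have "Sm (Suc n) (\<lambda>t. t * f t)"
    unfolding Sm_Suc using D eq S by auto
  moreover have "\<forall>k\<le>Suc n. \<forall>t>0. Dx k (\<lambda>t. t * f t) t = t * Dx k f t + real k * Dx (k - 1) f t"
  proof (intro allI impI)
    fix k t assume k: "k \<le> Suc n" and t: "(t::real) > 0"
    show "Dx k (\<lambda>t. t * f t) t = t * Dx k f t + real k * Dx (k - 1) f t"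
    proof (cases k)
      case (Suc j)
      have "Dx k (\<lambda>t. t * f t) t = Dx j (deriv (\<lambda>t. t * f t)) t"
        by (simp only: Suc Dx_Suc)
      also have "\<dots> = Dx j (\<lambda>t. 1 * f t + 1 * (t * deriv f t)) t"
        by (rule Dx_local[OF eq t, symmetric])
      also have "\<dots> = 1 * Dx j f t + 1 * Dx j (\<lambda>t. t * deriv f t) t"
        using Suc k t by (intro L2[rule_format]) auto
      also have "\<dots> = Dx j f t + (t * Dx j (deriv f) t + real j * Dx (j - 1) (deriv f) t)"
        using IH2[rule_format, of j t] Suc k t by simp
      also have "\<dots> = t * Dx k f t + real k * Dx (k - 1) f t"
      proof (cases j)
        case 0 then show ?thesis using Suc by (simp add: Dx_Suc)
      next
        case (Suc i) then show ?thesis using \<open>k = Suc j\<close> by (simp add: Dx_Suc algebra_simps)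
      qed
      finally show ?thesis .
    qed simp
  qed
  ultimately show ?case by (rule conjI)
qed

lemma Sm_exp:
  "Sm n f \<Longrightarrow> Sm n (\<lambda>t. exp (c * t) * f t)"
proof (induction n arbitrary: f)
  case 0
  then show ?case by simp
next
  case (Suc n)
  have df: "\<forall>t>0. (f has_real_derivative deriv f t) (at t)" and sf: "Sm n (deriv f)"
    using Suc.prems(1) Sm_Suc by auto
  have fn: "Sm n f" using Suc.prems Sm_mono by auto
  have D: "\<forall>t>0. ((\<lambda>t. exp (c * t) * f t) has_real_derivative exp (c * t) * (c * f t + 1 * deriv f t)) (at t)"
    using df by (auto intro!: derivative_eq_intros simp: algebra_simps)
  have eq: "\<forall>t>0. exp (c * t) * (c * f t + 1 * deriv f t) = deriv (\<lambda>t. exp (c * t) * f t) t"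
    using D by (auto simp: DERIV_imp_deriv)
  have L: "Sm n (\<lambda>t. c * f t + 1 * deriv f t)" by (rule conjunct1[OF Sm_lin[OF fn sf]])
  have S: "Sm n (deriv (\<lambda>t. exp (c * t) * f t))" by (rule Sm_local[OF eq Suc.IH[OF L]])
  show ?case unfolding Sm_Suc using D eq S by auto
qed

lemma Sm_pow: "Sm n y \<Longrightarrow> Sm n (\<lambda>s. s ^ a * y s)"
proof (induction a)
  case (Suc a)
  have "Sm n (\<lambda>t. t * (t ^ a * y t))" by (rule conjunct1[OF Sm_x[OF Suc.IH[OF Suc.prems]]])
  then show ?case by (simp add: mult.assoc)
qed simp

theorem theorem3p1:
  fixes \<alpha> :: nat and y :: "real \<Rightarrow> real" and x :: real
  assumes "Cn_on (2 * \<alpha> + 4) {0<..} y"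
    and "x > 0"
  shows "Lhigh (int \<alpha>) y x =
    - (L2 (2 * real \<alpha> + 1) (Lhigh (int \<alpha> - 1) y) x
       - ((2 * real \<alpha> + 2) / x + real \<alpha> + 1) * Lhigh (int \<alpha> - 1) y x)"
proof -
  have x: "x > 0" by fact
  have Sy: "Sm (2 * \<alpha> + 4) y" using assms(1) unfolding Cn_on_def Sm_def by auto
  define g where "g = (\<lambda>s. s ^ \<alpha> * y s)"
  have Sg: "Sm (2 * \<alpha> + 4) g" unfolding g_def by (rule Sm_pow[OF Sy])
  define G where "G = Dx (\<alpha> + 1) g"
  have SG: "Sm (\<alpha> + 3) G" unfolding G_def
    by (rule Sm_Dx) (use Sg in \<open>simp add: algebra_simps\<close>)
  define H where "H = (\<lambda>t. exp (- t) * G t)"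
  have SH: "Sm (\<alpha> + 3) H" unfolding H_def using Sm_exp[OF SG, of "-1"] by simp
  define K where "K = Dx (\<alpha> + 1) H"
  define K1 where "K1 = Dx (\<alpha> + 2) H"
  define K2 where "K2 = Dx (\<alpha> + 3) H"
  have dK: "\<And>t. t > 0 \<Longrightarrow> (K has_real_derivative K1 t) (at t)"
  proof -
    fix t :: real assume t: "t > 0"
    have "(Dx (\<alpha> + 1) H has_real_derivative Dx (Suc (\<alpha> + 1)) H t) (at t)"
      by (rule SmD[OF SH _ t]) simp
    moreover have "Suc (\<alpha> + 1) = \<alpha> + 2" by simp
    ultimately show "(K has_real_derivative K1 t) (at t)" unfolding K_def K1_def by metis
  qed
  have dK1: "\<And>t. t > 0 \<Longrightarrow> (K1 has_real_derivative K2 t) (at t)"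
  proof -
    fix t :: real assume t: "t > 0"
    have "(Dx (\<alpha> + 2) H has_real_derivative Dx (Suc (\<alpha> + 2)) H t) (at t)"
      by (rule SmD[OF SH _ t]) simp
    moreover have "Suc (\<alpha> + 2) = \<alpha> + 3" by simp
    ultimately show "(K1 has_real_derivative K2 t) (at t)" unfolding K1_def K2_def by metis
  qed
  have dG: "\<And>t. t > 0 \<Longrightarrow> (G has_real_derivative deriv G t) (at t)"
  proof -
    fix t :: real assume t: "t > 0"
    have "(Dx 0 G has_real_derivative Dx (Suc 0) G t) (at t)"
      by (rule SmD[OF SG _ t]) simp
    then show "(G has_real_derivative deriv G t) (at t)" by (simp add: Dx_Suc)
  qed
  have dH: "\<And>t. t > 0 \<Longrightarrow> deriv H t = - exp (- t) * G t + exp (- t) * deriv G t"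
  proof -
    fix t :: real assume t: "t > 0"
    have "(H has_real_derivative - exp (- t) * G t + exp (- t) * deriv G t) (at t)"
      unfolding H_def using dG[OF t] by (auto intro!: derivative_eq_intros)
    then show "deriv H t = - exp (- t) * G t + exp (- t) * deriv G t" by (rule DERIV_imp_deriv)
  qed
  have SHd: "Sm (\<alpha> + 2) (deriv H)" using SH Sm_Suc[of "\<alpha> + 2" H] by (simp add: numeral_3_eq_3 numeral_2_eq_2)
  have SH2: "Sm (\<alpha> + 2) H" using SH Sm_mono by simp
  have inner: "\<forall>t>0. exp (- t) * Dx (\<alpha> + 2) (\<lambda>s. s ^ (\<alpha> + 1) * y s) t
      = 1 * (t * deriv H t) + 1 * (1 * (t * H t) + (real \<alpha> + 2) * H t)"
  proof (intro allI impI)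
    fix t :: real assume t: "t > 0"
    have e: "(\<lambda>s. s ^ (\<alpha> + 1) * y s) = (\<lambda>s. s * g s)" by (auto simp: g_def)
    have "Dx (\<alpha> + 2) (\<lambda>s. s * g s) t = t * Dx (\<alpha> + 2) g t + real (\<alpha> + 2) * Dx (\<alpha> + 2 - 1) g t"
      using conjunct2[OF Sm_x[OF Sg], rule_format, of "\<alpha> + 2" t] t by simp
    also have "Dx (\<alpha> + 2) g = deriv G" unfolding G_def Dx_1[symmetric] Dx_add by simp
    also have "Dx (\<alpha> + 2 - 1) g = G" by (simp add: G_def)
    finally have fin: "Dx (\<alpha> + 2) (\<lambda>s. s * g s) t = t * deriv G t + real (\<alpha> + 2) * G t" .
    then show "exp (- t) * Dx (\<alpha> + 2) (\<lambda>s. s ^ (\<alpha> + 1) * y s) t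
      = 1 * (t * deriv H t) + 1 * (1 * (t * H t) + (real \<alpha> + 2) * H t)"
    proof -
      have hH: "H t = exp (- t) * G t" by (simp add: H_def)
      show ?thesis unfolding e fin dH[OF t] hH
        by (simp add: algebra_simps)
    qed
  qed
  have Sa: "Sm (\<alpha> + 2) (\<lambda>t. t * deriv H t)" and Da: "Dx (\<alpha> + 2) (\<lambda>t. t * deriv H t) x = x * K2 x + real (\<alpha> + 2) * K1 x"
  proof -
    show "Sm (\<alpha> + 2) (\<lambda>t. t * deriv H t)" by (rule conjunct1[OF Sm_x[OF SHd]])
    have "Dx (\<alpha> + 2) (\<lambda>t. t * deriv H t) x = x * Dx (\<alpha> + 2) (deriv H) x + real (\<alpha> + 2) * Dx (\<alpha> + 2 - 1) (deriv H) x"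
      using conjunct2[OF Sm_x[OF SHd], rule_format, of "\<alpha> + 2" x] x by simp
    also have "Dx (\<alpha> + 2) (deriv H) = K2"
    proof -
      have i2: "\<alpha> + 3 = Suc (\<alpha> + 2)" by simp
      show ?thesis unfolding K2_def i2 Dx_Suc by (rule refl)
    qed
    also have "Dx (\<alpha> + 2 - 1) (deriv H) = K1"
    proof -
      have i1: "\<alpha> + 2 - 1 = \<alpha> + 1" by simp
      have i2: "\<alpha> + 2 = Suc (\<alpha> + 1)" by simp
      show ?thesis unfolding i1 unfolding K1_def i2 Dx_Suc by (rule refl)
    qed
    finally show "Dx (\<alpha> + 2) (\<lambda>t. t * deriv H t) x = x * K2 x + real (\<alpha> + 2) * K1 x" .
  qed
  have Sb: "Sm (\<alpha> + 2) (\<lambda>t. t * H t)" and Db: "Dx (\<alpha> + 2) (\<lambda>t. t * H t) x = x * K1 x + real (\<alpha> + 2) * K x"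
  proof -
    show "Sm (\<alpha> + 2) (\<lambda>t. t * H t)" by (rule conjunct1[OF Sm_x[OF SH2]])
    have "Dx (\<alpha> + 2) (\<lambda>t. t * H t) x = x * Dx (\<alpha> + 2) H x + real (\<alpha> + 2) * Dx (\<alpha> + 2 - 1) H x"
      using conjunct2[OF Sm_x[OF SH2], rule_format, of "\<alpha> + 2" x] x by simp
    then show "Dx (\<alpha> + 2) (\<lambda>t. t * H t) x = x * K1 x + real (\<alpha> + 2) * K x"
      by (simp add: K_def K1_def)
  qed
  from Sm_lin[OF Sb SH2, of 1 "real \<alpha> + 2"]
  have Sc: "Sm (\<alpha> + 2) (\<lambda>t. 1 * (t * H t) + (real \<alpha> + 2) * H t)"
    and Dc: "Dx (\<alpha> + 2) (\<lambda>t. 1 * (t * H t) + (real \<alpha> + 2) * H t) x = 1 * (x * K1 x + real (\<alpha> + 2) * K x) + (real \<alpha> + 2) * K1 x"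
    using x Db by (auto simp: K1_def)
  from Sm_lin[OF Sa Sc, of 1 1]
  have Dd: "Dx (\<alpha> + 2) (\<lambda>t. 1 * (t * deriv H t) + 1 * (1 * (t * H t) + (real \<alpha> + 2) * H t)) x
     = 1 * (x * K2 x + real (\<alpha> + 2) * K1 x) + 1 * (1 * (x * K1 x + real (\<alpha> + 2) * K x) + (real \<alpha> + 2) * K1 x)"
    using x Da Dc by auto
  have LHS: "Lhigh (int \<alpha>) y x = (-1) ^ (\<alpha> + 1) * exp x * x *
     (x * K2 x + real (\<alpha> + 2) * K1 x + x * K1 x + real (\<alpha> + 2) * K x + (real \<alpha> + 2) * K1 x)"
  proof -
    have n1: "nat (int \<alpha> + 1) = \<alpha> + 1" and n2: "nat (int \<alpha> + 2) = \<alpha> + 2" by auto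
    have "Lhigh (int \<alpha>) y x = (-1) ^ (\<alpha> + 1) * exp x * x *
       Dx (\<alpha> + 2) (\<lambda>t. exp (- t) * Dx (\<alpha> + 2) (\<lambda>s. s ^ (\<alpha> + 1) * y s) t) x"
      unfolding Lhigh_def n1 n2 ..
    also have "Dx (\<alpha> + 2) (\<lambda>t. exp (- t) * Dx (\<alpha> + 2) (\<lambda>s. s ^ (\<alpha> + 1) * y s) t) x
       = Dx (\<alpha> + 2) (\<lambda>t. 1 * (t * deriv H t) + 1 * (1 * (t * H t) + (real \<alpha> + 2) * H t)) x"
      by (rule Dx_local[OF inner x])
    finally show ?thesis unfolding Dd by (simp add: algebra_simps)
  qed
  define sg :: real where "sg = (-1) ^ \<alpha>"
  define M where "M = (\<lambda>t. sg * exp t * t * K t)"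
  have LM: "Lhigh (int \<alpha> - 1) y = M"
  proof
    fix t
    have n1: "nat (int \<alpha> - 1 + 1) = \<alpha>" and n2: "nat (int \<alpha> - 1 + 2) = \<alpha> + 1" by auto
    show "Lhigh (int \<alpha> - 1) y t = M t"
      unfolding Lhigh_def n1 n2 M_def sg_def K_def H_def G_def g_def ..
  qed
  define N where "N = (\<lambda>t. sg * (exp t * (t + 1) * K t + exp t * t * K1 t))"
  have dM: "\<forall>t>0. deriv M t = N t"
  proof (intro allI impI)
    fix t :: real assume t: "t > 0"
    have "(M has_real_derivative N t) (at t)"
      unfolding M_def N_def using dK[OF t]
      by (auto intro!: derivative_eq_intros simp: algebra_simps)
    then show "deriv M t = N t" by (rule DERIV_imp_deriv)
  qed
  have "(N has_real_derivative sg * (exp x * (x + 2) * K x + 2 * exp x * (x + 1) * K1 x + exp x * x * K2 x)) (at x)"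
    unfolding N_def using dK[OF x] dK1[OF x]
    by (auto intro!: derivative_eq_intros simp: algebra_simps)
  then have ddM: "deriv (deriv M) x = sg * (exp x * (x + 2) * K x + 2 * exp x * (x + 1) * K1 x + exp x * x * K2 x)"
    using deriv_local[OF dM x] DERIV_imp_deriv by simp
  have RHS: "L2 (2 * real \<alpha> + 1) (Lhigh (int \<alpha> - 1) y) x =
     x * (sg * (exp x * (x + 2) * K x + 2 * exp x * (x + 1) * K1 x + exp x * x * K2 x))
     + (2 * real \<alpha> + 1 + 1 - x) * N x"
    unfolding L2_def LM using ddM dM x by (simp add: Dx_Suc numeral_2_eq_2)
  have s1: "(-1::real) ^ (\<alpha> + 1) = - sg" by (simp add: sg_def)
  show ?thesis unfolding LHS RHS unfolding LM s1
    using x by (simp add: M_def N_def field_simps)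
qed

end
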